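(* Let $W\in\mathbb{C}^{N\times N}$ be Hermitian positive definite and let $\vec b\in\mathbb{C}^N$ with $\|\vec b\|_2=1$. Run the Lanczos iteration on $(W,\vec b)$ and suppose it terminates at step $n\le N$, producing the $n\times n$ Jacobi matrix $T=T(W,\vec b)$. Let $T=HH^T$ be the Cholesky factorization of $T$, where $H$ is the lower-bidiagonal $n\times n$ matrix with diagonal entries $\alpha_0,\alpha_1,\dots,\alpha_{n-1}>0$ and subdiagonal entries $\beta_0,\dots,\beta_{n-2}$ (i.e. $H_{j+1,j+1}=\alpha_j$, $H_{j+2,j+1}=\beta_j$). (a) For the conjugate gradient algorithm (CGA) applied to $W\vec x=\vec b$ with $\vec x_0=0$, for every $k<n$, $$\|\vec r_k(W,\vec b)\|_2=\prod_{j=0}^{k-1}\frac{\beta_j}{\alpha_j},\qquad \|\vec e_k(W,\vec b)\|_W=\|\vec r_k(W,\vec b)\|_2\sqrt{\vec f_1^*(L_kL_k^T)^{-1}\vec f_1},\quad L_k=H_{k+1:n,\,k+1:n}.$$ (b) For the MINRES algorithm applied to $W\vec x=\vec b$, for every $k<n$, $$\|\vec r_k(W,\vec b)\|_2=\Big(\sum_{j=0}^k\prod_{\ell=0}^{j-1}\frac{\alpha_\ell^2}{\beta_\ell^2}\Big)^{-1/2}$$ (empty products equal $1$). Moreover $\vec r_n=0$.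
   Context: Lanczos iteration on $(W,\vec q_1)$, $\|\vec q_1\|_2=1$, $W=W^*$: set $b_{-1}=1$, $\vec q_0=0$; for $k=1,2,\dots$: $a_{k-1}=(W\vec q_k-b_{k-2}\vec q_{k-1})^*\vec q_k$, $\vec v_k=W\vec q_k-a_{k-1}\vec q_k-b_{k-2}\vec q_{k-1}$, $b_{k-1}=\|\vec v_k\|_2$; if $b_{k-1}\neq0$ set $\vec q_{k+1}=\vec v_k/b_{k-1}$, otherwise terminate. If it terminates at step $n$, $T(W,\vec q_1)$ is the $n\times n$ symmetric tridiagonal matrix with diagonal $a_0,\dots,a_{n-1}$ and off-diagonal $b_0,\dots,b_{n-2}$. The Krylov subspace is $\mathcal K_k=\mathrm{span}\{\vec b,W\vec b,\dots,W^{k-1}\vec b\}$. The $k$-th CGA iterate (with $\vec x_0=0$) is $\vec x_k=\mathrm{argmin}_{\vec y\in\mathcal K_k}\|\vec x-\vec y\|_W$ where $\vec x=W^{-1}\vec b$ and $\|\vec y\|_W^2=\vec y^*W\vec y$; the $k$-th MINRES iterate is $\vec x_k=\mathrm{argmin}_{\vec y\in\mathcal K_k}\|\vec b-W\vec y\|_2$. For either method $\vec r_k=\vec b-W\vec x_k$ and $\vec e_k=\vec x-\vec x_k$. $\vec f_1,\vec f_2,\dots$ is the standard basis; $H_{i:k,j:\ell}$ denotes the submatrix of rows $i..k$ and columns $j..\ell$. *)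

theory Defs
  imports "HOL-Analysis.Analysis"
begin

definition cinner :: "complex^'n \<Rightarrow> complex^'n \<Rightarrow> complex" where
  "cinner y x = (\<Sum>i\<in>UNIV. cnj (y $ i) * x $ i)"

definition hermitian :: "complex^'n^'n \<Rightarrow> bool" where
  "hermitian W \<longleftrightarrow> (\<forall>i j. W $ i $ j = cnj (W $ j $ i))"

definition hpd :: "complex^'n^'n \<Rightarrow> bool" where
  "hpd W \<longleftrightarrow> hermitian W \<and> (\<forall>x. x \<noteq> 0 \<longrightarrow> 0 < Re (cinner x (W *v x)))"

text \<open>Lanczos state after k steps: (q_k, q_(k+1), b_(k-1)), with q_0 = 0, b_(-1) = 1.\<close>
fun lanczos_state :: "complex^'n^'n \<Rightarrow> complex^'n \<Rightarrow> nat \<Rightarrow> (complex^'n) \<times> (complex^'n) \<times> real" where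
  "lanczos_state W q1 0 = (0, q1, 1)"
| "lanczos_state W q1 (Suc k) =
     (let (qp, qc, bp) = lanczos_state W q1 k;
          a = cinner (W *v qc - of_real bp *s qp) qc;
          v = W *v qc - a *s qc - of_real bp *s qp;
          bn = norm v
      in (qc, (1 / of_real bn) *s v, bn))"

text \<open>q_k (k >= 1): the k-th Lanczos vector.\<close>
definition lanczos_q :: "complex^'n^'n \<Rightarrow> complex^'n \<Rightarrow> nat \<Rightarrow> complex^'n" where
  "lanczos_q W q1 k = fst (snd (lanczos_state W q1 (k - 1)))"

definition lanczos_a :: "complex^'n^'n \<Rightarrow> complex^'n \<Rightarrow> nat \<Rightarrow> complex" where
  "lanczos_a W q1 k = (let (qp, qc, bp) = lanczos_state W q1 k in
      cinner (W *v qc - of_real bp *s qp) qc)"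

definition lanczos_b :: "complex^'n^'n \<Rightarrow> complex^'n \<Rightarrow> nat \<Rightarrow> real" where
  "lanczos_b W q1 k = snd (snd (lanczos_state W q1 (Suc k)))"

definition lanczos_terminates_at :: "complex^'n^'n \<Rightarrow> complex^'n \<Rightarrow> nat \<Rightarrow> bool" where
  "lanczos_terminates_at W q1 n \<longleftrightarrow>
     1 \<le> n \<and> lanczos_b W q1 (n - 1) = 0 \<and> (\<forall>j < n - 1. lanczos_b W q1 j \<noteq> 0)"

text \<open>The Jacobi matrix T(W,q1) (0-based indices i,j < n).\<close>
definition jacobi_T :: "complex^'n^'n \<Rightarrow> complex^'n \<Rightarrow> nat \<Rightarrow> nat \<Rightarrow> complex" where
  "jacobi_T W q1 i j =
     (if i = j then lanczos_a W q1 i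
      else if i = j + 1 then of_real (lanczos_b W q1 j)
      else if j = i + 1 then of_real (lanczos_b W q1 i)
      else 0)"

definition bidiag_H :: "(nat \<Rightarrow> real) \<Rightarrow> (nat \<Rightarrow> real) \<Rightarrow> nat \<Rightarrow> nat \<Rightarrow> real" where
  "bidiag_H \<alpha> \<beta> i j = (if i = j then \<alpha> i else if i = j + 1 then \<beta> j else 0)"

definition fmat_inv :: "nat \<Rightarrow> (nat \<Rightarrow> nat \<Rightarrow> real) \<Rightarrow> nat \<Rightarrow> nat \<Rightarrow> real" where
  "fmat_inv m A = (THE B. (\<forall>i<m. \<forall>j<m. (\<Sum>l<m. A i l * B l j) = (if i = j then 1 else 0)
                         \<and> (\<Sum>l<m. B i l * A l j) = (if i = j then 1 else 0))
                    \<and> (\<forall>i j. \<not> (i < m \<and> j < m) \<longrightarrow> B i j = 0))"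

definition krylov :: "complex^'n^'n \<Rightarrow> complex^'n \<Rightarrow> nat \<Rightarrow> (complex^'n) set" where
  "krylov W b k = {y. \<exists>c :: nat \<Rightarrow> complex. y = (\<Sum>j<k. c j *s (((*v) W ^^ j) b))}"

definition Wnorm :: "complex^'n^'n \<Rightarrow> complex^'n \<Rightarrow> real" where
  "Wnorm W y = sqrt (Re (cinner y (W *v y)))"

definition cga_iterate :: "complex^'n^'n \<Rightarrow> complex^'n \<Rightarrow> nat \<Rightarrow> complex^'n" where
  "cga_iterate W b k = (SOME xk. xk \<in> krylov W b k \<and>
      (\<forall>y \<in> krylov W b k. Wnorm W (matrix_inv W *v b - xk) \<le> Wnorm W (matrix_inv W *v b - y)))"

definition minres_iterate :: "complex^'n^'n \<Rightarrow> complex^'n \<Rightarrow> nat \<Rightarrow> complex^'n" where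
  "minres_iterate W b k = (SOME xk. xk \<in> krylov W b k \<and>
      (\<forall>y \<in> krylov W b k. norm (b - W *v xk) \<le> norm (b - W *v y)))"

end

theory Submission
  imports Defs
begin


lemma cinner_add_right: "cinner y (x + z) = cinner y x + cinner y z"
  by (simp add: cinner_def distrib_left sum.distrib)
lemma cinner_diff_right: "cinner y (x - z) = cinner y x - cinner y z"
  by (simp add: cinner_def right_diff_distrib sum_subtractf)
lemma cinner_add_left: "cinner (y + z) x = cinner y x + cinner z x"
  by (simp add: cinner_def distrib_right sum.distrib)
lemma cinner_diff_left: "cinner (y - z) x = cinner y x - cinner z x"
  by (simp add: cinner_def left_diff_distrib sum_subtractf)
lemma cinner_smult_right: "cinner y (c *s x) = c * cinner y x"
  by (simp add: cinner_def sum_distrib_left algebra_simps)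
lemma cinner_smult_left: "cinner (c *s y) x = cnj c * cinner y x"
  by (simp add: cinner_def sum_distrib_left algebra_simps)
lemma cinner_zero_left[simp]: "cinner 0 x = 0" by (simp add: cinner_def)
lemma cinner_zero_right[simp]: "cinner x 0 = 0" by (simp add: cinner_def)
lemma cinner_sum_right: "cinner y (\<Sum>i\<in>A. f i) = (\<Sum>i\<in>A. cinner y (f i))"
  by (simp add: cinner_def sum_distrib_left sum.swap[of _ A])
lemma cinner_sum_left: "cinner (\<Sum>i\<in>A. f i) x = (\<Sum>i\<in>A. cinner (f i) x)"
  by (simp add: cinner_def sum_distrib_right sum.swap[of _ A])
lemma cinner_cnj: "cnj (cinner x y) = cinner y x"
  by (simp add: cinner_def mult.commute)
lemma cinner_self: "cinner x x = of_real ((norm x)^2)"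
proof -
  have "cinner x x = (\<Sum>i\<in>UNIV. of_real ((norm (x$i))^2))"
    unfolding cinner_def by (intro sum.cong refl) (simp only: complex_norm_square mult.commute)
  also have "\<dots> = of_real (\<Sum>i\<in>UNIV. (norm (x$i))^2)" by simp
  also have "(\<Sum>i\<in>UNIV. (norm (x$i))^2) = (norm x)^2"
    by (simp add: norm_vec_def L2_set_def sum_nonneg)
  finally show ?thesis .
qed
lemma cinner_herm: assumes "hermitian W" shows "cinner y (W *v x) = cinner (W *v y) x"
proof -
  have "cinner y (W *v x) = (\<Sum>i\<in>UNIV. \<Sum>j\<in>UNIV. cnj (y$i) * W$i$j * x$j)"
    by (simp add: cinner_def matrix_vector_mult_def sum_distrib_left mult.assoc)
  also have "\<dots> = (\<Sum>j\<in>UNIV. \<Sum>i\<in>UNIV. cnj (y$i) * W$i$j * x$j)" by (rule sum.swap)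
  also have "\<dots> = cinner (W *v y) x"
  proof -
    have h: "\<And>i j. cnj (W$j$i) = W$i$j" using assms unfolding hermitian_def by (metis complex_cnj_cnj)
    have "cinner (W *v y) x = (\<Sum>j\<in>UNIV. (\<Sum>i\<in>UNIV. cnj (W$j$i) * cnj (y$i)) * x$j)"
      by (simp add: cinner_def matrix_vector_mult_def)
    also have "\<dots> = (\<Sum>j\<in>UNIV. \<Sum>i\<in>UNIV. cnj (y $ i) * W $ i $ j * x $ j)"
      by (intro sum.cong refl) (simp add: sum_distrib_right sum_distrib_left h mult.commute)
    finally show ?thesis by simp
  qed
  finally show ?thesis .
qed
lemma mv_smult: "W *v (c *s x) = c *s (W *v (x::complex^'n))"
  by (simp add: vec_eq_iff matrix_vector_mult_def sum_distrib_left algebra_simps)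
lemma mv_sum: "W *v (\<Sum>i\<in>A. f i) = (\<Sum>i\<in>A. W *v (f i::complex^'n))"
  by (simp add: vec_eq_iff matrix_vector_mult_def sum_distrib_left sum.swap[of _ A])



definition Hi :: "(nat\<Rightarrow>real) \<Rightarrow> (nat\<Rightarrow>real) \<Rightarrow> nat \<Rightarrow> nat \<Rightarrow> real" where
 "Hi \<alpha> \<beta> i j = (if j \<le> i then (-1)^(i-j) * (\<Prod>l\<in>{j..<i}. \<beta> l) / (\<Prod>l\<in>{j..i}. \<alpha> l) else 0)"

lemma bidiag_split: "bidiag_H \<alpha> \<beta> i j = (if i = j then \<alpha> j else 0) + (if i = Suc j then \<beta> j else 0)"
  by (simp add: bidiag_H_def)

lemma sum_bidiag_col:
  fixes f :: "nat \<Rightarrow> 'a::real_algebra_1"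
  assumes "j < m"
  shows "(\<Sum>l<m. of_real (bidiag_H \<alpha> \<beta> l j) * f l) = of_real (\<alpha> j) * f j + (if Suc j < m then of_real (\<beta> j) * f (Suc j) else 0)"
proof -
  have "(\<Sum>l<m. of_real (bidiag_H \<alpha> \<beta> l j) * f l) = (\<Sum>l<m. (if l = j then of_real (\<alpha> j) * f j else 0) + (if l = Suc j then of_real (\<beta> j) * f (Suc j) else 0))"
    by (intro sum.cong refl) (auto simp: bidiag_H_def)
  also have "\<dots> = of_real (\<alpha> j) * f j + (if Suc j < m then of_real (\<beta> j) * f (Suc j) else 0)"
    using assms by (simp add: sum.distrib)
  finally show ?thesis .
qed

lemma sum_bidiag_row:
  fixes f :: "nat \<Rightarrow> 'a::real_algebra_1"
  assumes "i < m"
  shows "(\<Sum>l<m. of_real (bidiag_H \<alpha> \<beta> i l) * f l) = of_real (\<alpha> i) * f i + (if 0 < i then of_real (\<beta> (i - 1)) * f (i - 1) else 0)"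
proof -
  have "(\<Sum>l<m. of_real (bidiag_H \<alpha> \<beta> i l) * f l) = (\<Sum>l<m. (if l = i then of_real (\<alpha> i) * f i else 0) + (if 0 < i \<and> l = i - 1 then of_real (\<beta> (i-1)) * f (i-1) else 0))"
    by (intro sum.cong refl) (auto simp: bidiag_H_def)
  also have "\<dots> = of_real (\<alpha> i) * f i + (if 0 < i then of_real (\<beta> (i - 1)) * f (i - 1) else 0)"
    using assms by (auto simp: sum.distrib)
  finally show ?thesis .
qed

lemma sum_bidiag_col_real:
  fixes f :: "nat \<Rightarrow> real"
  assumes "j < m"
  shows "(\<Sum>l<m. bidiag_H \<alpha> \<beta> l j * f l) = \<alpha> j * f j + (if Suc j < m then \<beta> j * f (Suc j) else 0)"
  using sum_bidiag_col[OF assms, of \<alpha> \<beta> f] by simp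

lemma sum_bidiag_row_real:
  fixes f :: "nat \<Rightarrow> real"
  assumes "i < m"
  shows "(\<Sum>l<m. bidiag_H \<alpha> \<beta> i l * f l) = \<alpha> i * f i + (if 0 < i then \<beta> (i - 1) * f (i - 1) else 0)"
  using sum_bidiag_row[OF assms, of \<alpha> \<beta> f] by simp

lemma Hi_zero: "i < j \<Longrightarrow> Hi \<alpha> \<beta> i j = 0" by (simp add: Hi_def)
lemma Hi_diag: "Hi \<alpha> \<beta> i i = 1 / \<alpha> i" by (simp add: Hi_def)

lemma Hi_step_left:
  assumes "j < i" "\<alpha> j \<noteq> 0"
  shows "\<alpha> j * Hi \<alpha> \<beta> i j + \<beta> j * Hi \<alpha> \<beta> i (Suc j) = 0"
proof -
  have p1: "(\<Prod>l\<in>{j..<i}. \<beta> l) = \<beta> j * (\<Prod>l\<in>{Suc j..<i}. \<beta> l)"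
    using assms by (simp add: prod.atLeast_Suc_lessThan)
  have p2: "(\<Prod>l\<in>{j..i}. \<alpha> l) = \<alpha> j * (\<Prod>l\<in>{Suc j..i}. \<alpha> l)"
    using assms by (simp add: prod.atLeast_Suc_atMost)
  have s: "(-1::real)^(i-j) = - ((-1)^(i - Suc j))"
    using assms by (metis Suc_diff_Suc mult_minus1 power_Suc)
  show ?thesis using assms unfolding Hi_def p1 p2 s by (simp add: field_simps)
qed

lemma Hi_step_right:
  assumes "j < i" "\<alpha> i \<noteq> 0"
  shows "\<alpha> i * Hi \<alpha> \<beta> i j + \<beta> (i - 1) * Hi \<alpha> \<beta> (i - 1) j = 0"
proof -
  obtain k where k: "i = Suc k" using assms by (cases i) auto
  have p1: "(\<Prod>l\<in>{j..<Suc k}. \<beta> l) = (\<Prod>l\<in>{j..<k}. \<beta> l) * \<beta> k"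
    using assms k by (simp add: prod.atLeastLessThan_Suc)
  have p2: "(\<Prod>l\<in>{j..Suc k}. \<alpha> l) = (\<Prod>l\<in>{j..k}. \<alpha> l) * \<alpha> (Suc k)"
    using assms k by (simp add: prod.nat_ivl_Suc')
  have s: "(-1::real)^(Suc k-j) = - ((-1)^(k - j))"
    using assms k by (simp add: Suc_diff_le)
  show ?thesis using assms unfolding Hi_def k p1 p2 s by (simp add: field_simps)
qed

lemma Hi_H:
  assumes "i < m" "j < m" "\<forall>l<m. \<alpha> l \<noteq> 0"
  shows "(\<Sum>l<m. bidiag_H \<alpha> \<beta> l j * Hi \<alpha> \<beta> i l) = (if i = j then 1 else 0)"
proof -
  have "(\<Sum>l<m. bidiag_H \<alpha> \<beta> l j * Hi \<alpha> \<beta> i l) = \<alpha> j * Hi \<alpha> \<beta> i j + (if Suc j < m then \<beta> j * Hi \<alpha> \<beta> i (Suc j) else 0)"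
    using sum_bidiag_col_real[OF assms(2)] .
  also have "\<dots> = (if i = j then 1 else 0)"
  proof (cases "j < i")
    case True then show ?thesis using Hi_step_left[OF True] assms by auto
  next
    case False then show ?thesis using assms by (auto simp: Hi_zero Hi_diag)
  qed
  finally show ?thesis .
qed

lemma H_Hi:
  assumes "i < m" "j < m" "\<forall>l<m. \<alpha> l \<noteq> 0"
  shows "(\<Sum>l<m. bidiag_H \<alpha> \<beta> i l * Hi \<alpha> \<beta> l j) = (if i = j then 1 else 0)"
proof -
  have "(\<Sum>l<m. bidiag_H \<alpha> \<beta> i l * Hi \<alpha> \<beta> l j) = \<alpha> i * Hi \<alpha> \<beta> i j + (if 0 < i then \<beta> (i-1) * Hi \<alpha> \<beta> (i-1) j else 0)"
    using sum_bidiag_row_real[OF assms(1)] .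
  also have "\<dots> = (if i = j then 1 else 0)"
  proof (cases "j < i")
    case True then show ?thesis using Hi_step_right[OF True] assms by auto
  next
    case False then show ?thesis using assms by (auto simp: Hi_zero Hi_diag)
  qed
  finally show ?thesis .
qed



lemma ifmult1[simp]: "(if P then 1 else 0) * (x::real) = (if P then x else 0)" by simp
lemma ifmult2[simp]: "(x::real) * (if P then 1 else 0) = (if P then x else 0)" by simp
lemma ifmult3[simp]: "(if P then (x::real) else 0) * y = (if P then x * y else 0)" by simp
lemma ifmult4[simp]: "(y::real) * (if P then x else 0) = (if P then y * x else 0)" by simp

lemma inv_unique:
  fixes A B B' :: "nat \<Rightarrow> nat \<Rightarrow> real"
  assumes B: "\<forall>i<m. \<forall>j<m. (\<Sum>l<m. A i l * B l j) = (if i = j then 1 else 0) \<and> (\<Sum>l<m. B i l * A l j) = (if i = j then 1 else 0)"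
    and B': "\<forall>i<m. \<forall>j<m. (\<Sum>l<m. A i l * B' l j) = (if i = j then 1 else 0) \<and> (\<Sum>l<m. B' i l * A l j) = (if i = j then 1 else 0)"
    and i: "i < m" and j: "j < m"
  shows "B' i j = B i j"
proof -
  have "B' i j = (\<Sum>l<m. B' i l * (if l = j then 1 else 0))" using j by simp
  also have "\<dots> = (\<Sum>l<m. B' i l * (\<Sum>t<m. A l t * B t j))"
    using B j by (intro sum.cong refl) auto
  also have "\<dots> = (\<Sum>l<m. \<Sum>t<m. B' i l * A l t * B t j)" by (simp add: sum_distrib_left mult.assoc)
  also have "\<dots> = (\<Sum>t<m. \<Sum>l<m. B' i l * A l t * B t j)" by (rule sum.swap)
  also have "\<dots> = (\<Sum>t<m. (\<Sum>l<m. B' i l * A l t) * B t j)" by (simp add: sum_distrib_right)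
  also have "\<dots> = (\<Sum>t<m. (if i = t then 1 else 0) * B t j)"
    using B' i by (intro sum.cong refl) auto
  also have "\<dots> = B i j" using i by simp
  finally show ?thesis .
qed

lemma fmat_inv_HHt:
  assumes m: "0 < m" and al: "\<forall>l<m. \<alpha> l \<noteq> 0"
  shows "fmat_inv m (\<lambda>i j. \<Sum>l<m. bidiag_H \<alpha> \<beta> i l * bidiag_H \<alpha> \<beta> j l) 0 0 = (\<Sum>l<m. (Hi \<alpha> \<beta> l 0)^2)"
proof -
  define H where "H = bidiag_H \<alpha> \<beta>"
  define G where "G = Hi \<alpha> \<beta>"
  define A where "A = (\<lambda>i j. \<Sum>l<m. H i l * H j l)"
  define B where "B = (\<lambda>i j. if i < m \<and> j < m then (\<Sum>t<m. G t i * G t j) else 0)"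
  have HG: "(\<Sum>l<m. H i l * G l j) = (if i = j then 1 else 0)" if "i<m" "j<m" for i j
    using H_Hi[OF that al] unfolding H_def G_def .
  have GH: "(\<Sum>l<m. H l j * G i l) = (if i = j then 1 else 0)" if "i<m" "j<m" for i j
    using Hi_H[OF that al] unfolding H_def G_def .
  let ?P = "\<lambda>B. (\<forall>i<m. \<forall>j<m. (\<Sum>l<m. A i l * B l j) = (if i = j then 1 else 0)
                         \<and> (\<Sum>l<m. B i l * A l j) = (if i = j then 1 else 0))
                    \<and> (\<forall>i j. \<not> (i < m \<and> j < m) \<longrightarrow> B i j = 0)"
  have PB: "?P B"
  proof (intro conjI allI impI)
    fix i j assume i: "i < m" and j: "j < m"
    have "(\<Sum>l<m. A i l * B l j) = (\<Sum>l<m. \<Sum>s<m. \<Sum>t<m. H i s * (H l s * G t l) * G t j)"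
      unfolding A_def B_def using j
      by (intro sum.cong refl) (simp add: sum_distrib_left sum_distrib_right mult_ac)
    also have "\<dots> = (\<Sum>s<m. \<Sum>t<m. H i s * (\<Sum>l<m. H l s * G t l) * G t j)"
    proof -
      have "(\<Sum>l<m. \<Sum>s<m. \<Sum>t<m. H i s * (H l s * G t l) * G t j) = (\<Sum>s<m. \<Sum>l<m. \<Sum>t<m. H i s * (H l s * G t l) * G t j)" by (rule sum.swap)
      also have "\<dots> = (\<Sum>s<m. \<Sum>t<m. \<Sum>l<m. H i s * (H l s * G t l) * G t j)" by (rule sum.cong[OF refl], rule sum.swap)
      finally show ?thesis by (simp add: sum_distrib_left sum_distrib_right mult_ac)
    qed
    also have "\<dots> = (\<Sum>s<m. \<Sum>t<m. H i s * (if t = s then 1 else 0) * G t j)"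
      using GH by (intro sum.cong refl) auto
    also have "\<dots> = (\<Sum>s<m. H i s * G s j)"
      by (intro sum.cong refl) simp
    also have "\<dots> = (if i = j then 1 else 0)" using HG i j by simp
    finally show "(\<Sum>l<m. A i l * B l j) = (if i = j then 1 else 0)" .
    have "(\<Sum>l<m. B i l * A l j) = (\<Sum>l<m. \<Sum>t<m. \<Sum>s<m. G t i * (G t l * H l s) * H j s)"
      unfolding A_def B_def using i
      by (intro sum.cong refl) (simp add: sum_distrib_left sum_distrib_right mult_ac, rule sum.swap)
    also have "\<dots> = (\<Sum>t<m. \<Sum>s<m. G t i * (\<Sum>l<m. G t l * H l s) * H j s)"
    proof -
      have "(\<Sum>l<m. \<Sum>t<m. \<Sum>s<m. G t i * (G t l * H l s) * H j s) = (\<Sum>t<m. \<Sum>l<m. \<Sum>s<m. G t i * (G t l * H l s) * H j s)" by (rule sum.swap)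
      also have "\<dots> = (\<Sum>t<m. \<Sum>s<m. \<Sum>l<m. G t i * (G t l * H l s) * H j s)" by (rule sum.cong[OF refl], rule sum.swap)
      finally show ?thesis by (simp add: sum_distrib_left sum_distrib_right mult_ac)
    qed
    also have "\<dots> = (\<Sum>t<m. \<Sum>s<m. G t i * (if t = s then 1 else 0) * H j s)"
      using GH by (intro sum.cong refl) (auto simp: mult.commute)
    also have "\<dots> = (\<Sum>t<m. H j t * G t i)"
      by (intro sum.cong refl) (simp add: mult.commute)
    also have "\<dots> = (if i = j then 1 else 0)" using HG i j by auto
    finally show "(\<Sum>l<m. B i l * A l j) = (if i = j then 1 else 0)" .
  next
    fix i j assume "\<not> (i < m \<and> j < m)" then show "B i j = 0" unfolding B_def by auto
  qed
  have "(THE B. ?P B) = B"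
  proof (rule the_equality)
    show "?P B" by (rule PB)
  next
    fix B' assume PB': "?P B'"
    show "B' = B"
    proof (intro ext)
      fix i j show "B' i j = B i j"
      proof (cases "i < m \<and> j < m")
        case True then show ?thesis using inv_unique[of m A B B' i j] PB PB' by blast
      next
        case False then show ?thesis using PB PB' by auto
      qed
    qed
  qed
  then have "fmat_inv m A = B" unfolding fmat_inv_def by simp
  then show ?thesis using m unfolding A_def H_def B_def G_def by (simp add: power2_eq_square)
qed



locale lzc =
  fixes W :: "complex^'N^'N" and b :: "complex^'N" and n :: nat
  assumes herm: "hermitian W" and bnorm: "norm b = 1" and lterm: "lanczos_terminates_at W b n"
begin

definition p where "p k = fst (snd (lanczos_state W b k))"
definition pp where "pp k = fst (lanczos_state W b k)"
definition bb where "bb k = snd (snd (lanczos_state W b k))"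
abbreviation "a k \<equiv> lanczos_a W b k"
abbreviation "lb k \<equiv> lanczos_b W b k"
definition v where "v k = W *v p k - a k *s p k - of_real (bb k) *s pp k"

lemma st_eq: "lanczos_state W b k = (pp k, p k, bb k)" by (simp add: p_def pp_def bb_def)
lemma a_eq: "a k = cinner (W *v p k - of_real (bb k) *s pp k) (p k)"
  by (simp add: lanczos_a_def st_eq)
lemma stS: "lanczos_state W b (Suc k) = (p k, (1 / of_real (norm (v k))) *s v k, norm (v k))"
  by (simp add: st_eq[of k] v_def a_eq[symmetric] Let_def)
lemma lb_eq: "lb k = norm (v k)" by (simp add: lanczos_b_def stS del: lanczos_state.simps)
lemma ppS: "pp (Suc k) = p k" by (simp add: pp_def stS del: lanczos_state.simps)
lemma pS: "p (Suc k) = (1 / of_real (lb k)) *s v k" by (simp add: p_def stS lb_eq del: lanczos_state.simps)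
lemma bbS: "bb (Suc k) = lb k" by (simp add: bb_def stS lb_eq del: lanczos_state.simps)
lemma pp0: "pp 0 = 0" by (simp add: pp_def)
lemma p0: "p 0 = b" by (simp add: p_def)
lemma bb0: "bb 0 = 1" by (simp add: bb_def)

lemma lbp: "of_real (lb k) *s p (Suc k) = v k"
proof (cases "lb k = 0")
  case True then have "v k = 0" by (simp add: lb_eq)
  then show ?thesis using True by simp
next
  case False then show ?thesis by (simp add: pS vector_smult_assoc)
qed

lemma recur: "W *v p k = a k *s p k + of_real (bb k) *s pp k + of_real (lb k) *s p (Suc k)"
  by (simp add: lbp v_def)

lemma n_pos: "1 \<le> n" using lterm by (simp add: lanczos_terminates_at_def)
lemma lb_last: "lb (n - 1) = 0" using lterm by (simp add: lanczos_terminates_at_def)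
lemma lb_nz: "j < n - 1 \<Longrightarrow> lb j \<noteq> 0" using lterm by (simp add: lanczos_terminates_at_def)
lemma lb_nonneg: "0 \<le> lb j" by (simp add: lb_eq)

lemma orth_step:
  assumes IH: "\<forall>i\<le>k. \<forall>j\<le>k. cinner (p i) (p j) = (if i = j then 1 else 0)"
    and j: "j \<le> k"
  shows "cinner (p j) (v k) = 0"
proof (cases "j = k")
  case True
  have ppk: "cinner (pp k) (p k) = 0"
  proof (cases k)
    case 0 then show ?thesis by (simp add: pp0)
  next
    case (Suc k') then show ?thesis using IH by (simp add: ppS)
  qed
  have ppk2: "cinner (p k) (pp k) = 0"
    using ppk cinner_cnj[of "pp k" "p k"] by simp
  have "a k = cinner (W *v p k) (p k)"
    by (simp add: a_eq cinner_diff_left cinner_smult_left ppk)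
  also have "\<dots> = cinner (p k) (W *v p k)" using cinner_herm[OF herm] by simp
  finally have ak: "a k = cinner (p k) (W *v p k)" .
  have pkk: "cinner (p k) (p k) = 1" using IH by simp
  show ?thesis using True
    by (simp add: v_def cinner_diff_right cinner_smult_right ak pkk ppk2)
next
  case False
  then have jk: "j < k" using j by simp
  then obtain k' where k': "k = Suc k'" by (cases k) auto
  have t1: "cinner (pp j) (p k) = 0"
  proof (cases j)
    case 0 then show ?thesis by (simp add: pp0)
  next
    case (Suc j') then show ?thesis using IH jk by (simp add: ppS)
  qed
  have "cinner (p j) (W *v p k) = cinner (W *v p j) (p k)" using cinner_herm[OF herm] by simp
  also have "\<dots> = of_real (lb j) * cinner (p (Suc j)) (p k)"
    using IH jk t1 by (simp add: recur[of j] cinner_add_left cinner_smult_left)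
  finally have e1: "cinner (p j) (W *v p k) = of_real (lb j) * (if Suc j = k then 1 else 0)"
    using IH jk by simp
  have e2: "cinner (p j) (p k) = 0" using IH jk by simp
  have e3: "cinner (p j) (pp k) = (if j = k' then 1 else 0)"
    using IH jk k' by (simp add: ppS)
  show ?thesis
    unfolding v_def cinner_diff_right cinner_smult_right e1 e2 e3 using k' jk by (simp add: bbS)
qed

lemma orth_upto: "k < n \<Longrightarrow> \<forall>i\<le>k. \<forall>j\<le>k. cinner (p i) (p j) = (if i = j then 1 else 0)"
proof (induction k)
  case 0
  show ?case using cinner_self[of b] bnorm by (simp add: p0)
next
  case (Suc k)
  then have IH: "\<forall>i\<le>k. \<forall>j\<le>k. cinner (p i) (p j) = (if i = j then 1 else 0)" by simp
  have lbk: "lb k \<noteq> 0" using Suc.prems lb_nz by simp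
  have A: "cinner (p j) (p (Suc k)) = 0" if "j \<le> k" for j
    using orth_step[OF IH that] by (simp add: pS cinner_smult_right)
  have B: "cinner (p (Suc k)) (p j) = 0" if "j \<le> k" for j
    using A[OF that] cinner_cnj[of "p j" "p (Suc k)"] by simp
  have C: "cinner (p (Suc k)) (p (Suc k)) = 1"
  proof -
    have "cinner (p (Suc k)) (p (Suc k)) = cnj (1 / of_real (lb k)) * (1 / of_real (lb k)) * cinner (v k) (v k)"
      by (simp add: pS cinner_smult_left cinner_smult_right)
    also have "\<dots> = 1" using lbk by (simp add: cinner_self lb_eq power2_eq_square)
    finally show ?thesis .
  qed
  show ?case
  proof (intro allI impI)
    fix i j assume "i \<le> Suc k" "j \<le> Suc k"
    then show "cinner (p i) (p j) = (if i = j then 1 else 0)"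
      using IH A B C by (cases "i = Suc k"; cases "j = Suc k") auto
  qed
qed

lemma orth: "i < n \<Longrightarrow> j < n \<Longrightarrow> cinner (p i) (p j) = (if i = j then 1 else 0)"
  using orth_upto[of "n - 1"] n_pos by auto

end


lemma smult_sum_left: "(\<Sum>i\<in>A. f i) *s (x::complex^'n) = (\<Sum>i\<in>A. f i *s x)"
  by (simp add: vec_eq_iff sum_distrib_right)
lemma smult_sum_right: "c *s (\<Sum>i\<in>A. f i) = (\<Sum>i\<in>A. c *s (f i::complex^'n))"
  by (simp add: vec_eq_iff sum_distrib_left)

lemma jacobi_split: "jacobi_T W b i j = (if i = j then lanczos_a W b j else 0)
   + (if i = Suc j then of_real (lanczos_b W b j) else 0) + (if j = Suc i then of_real (lanczos_b W b i) else 0)"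
  by (simp add: jacobi_T_def)

context lzc begin

definition phi :: "(nat \<Rightarrow> complex) \<Rightarrow> complex^'N" where "phi c = (\<Sum>i<n. c i *s p i)"

lemma phi_inner: "cinner (phi c) (phi d) = (\<Sum>i<n. cnj (c i) * d i)"
proof -
  have "cinner (phi c) (phi d) = (\<Sum>i<n. cnj (c i) * cinner (p i) (phi d))"
    by (simp only: phi_def cinner_sum_left cinner_smult_left)
  also have "\<dots> = (\<Sum>i<n. cnj (c i) * (\<Sum>j<n. d j * cinner (p i) (p j)))"
    by (simp only: phi_def cinner_sum_right cinner_smult_right)
  also have "\<dots> = (\<Sum>i<n. cnj (c i) * d i)"
  proof (intro sum.cong refl)
    fix i assume i: "i \<in> {..<n}"
    have "(\<Sum>j<n. d j * cinner (p i) (p j)) = (\<Sum>j<n. if i = j then d j else 0)"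
      using i by (intro sum.cong refl) (simp add: orth)
    also have "\<dots> = d i" using i by simp
    finally show "cnj (c i) * (\<Sum>j<n. d j * cinner (p i) (p j)) = cnj (c i) * d i" by simp
  qed
  finally show ?thesis .
qed

lemma norm_phi: "norm (phi c) = L2_set (\<lambda>i. norm (c i)) {..<n}"
proof -
  have "of_real ((norm (phi c))^2) = cinner (phi c) (phi c)" by (simp add: cinner_self)
  also have "\<dots> = (\<Sum>i<n. of_real ((norm (c i))^2))"
    by (simp only: phi_inner complex_norm_square mult.commute)
  also have "\<dots> = of_real (\<Sum>i<n. (norm (c i))^2)" by simp
  finally have "(norm (phi c))^2 = (\<Sum>i<n. (norm (c i))^2)" using of_real_eq_iff by blast
  then show ?thesis unfolding L2_set_def by (metis norm_ge_zero real_sqrt_unique)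
qed

lemma phi_diff: "phi (\<lambda>i. f i - g i) = phi f - phi g"
  by (simp add: phi_def vector_ssub_ldistrib sum_subtractf scalar_mult_eq_scaleR scaleR_left_diff_distrib)

lemma phi_lin: "(\<Sum>j\<in>A. c j *s phi (f j)) = phi (\<lambda>i. \<Sum>j\<in>A. c j * f j i)"
  by (simp add: phi_def smult_sum_right smult_sum_left vector_smult_assoc sum.swap[of _ A])

lemma Wp_sum: assumes j: "j < n" shows "W *v p j = (\<Sum>i<n. jacobi_T W b i j *s p i)"
proof -
  have "(\<Sum>i<n. jacobi_T W b i j *s p i) = (\<Sum>i<n. (if i = j then a j *s p j else 0)
     + (if i = Suc j then of_real (lb j) *s p (Suc j) else 0) + (if 0 < j \<and> i = j - 1 then of_real (lb (j-1)) *s p (j-1) else 0))"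
    by (intro sum.cong refl) (auto simp: jacobi_split vector_sadd_rdistrib)
  also have "\<dots> = a j *s p j + (if Suc j < n then of_real (lb j) *s p (Suc j) else 0)
        + (if 0 < j then of_real (lb (j-1)) *s p (j-1) else 0)"
    using j by (simp add: sum.distrib)
  also have "\<dots> = W *v p j"
  proof -
    have A: "(if Suc j < n then of_real (lb j) *s p (Suc j) else 0) = of_real (lb j) *s p (Suc j)"
    proof (cases "Suc j < n")
      case False then have "j = n - 1" using j by simp
      then show ?thesis using lb_last False by simp
    qed simp
    have B: "(if 0 < j then of_real (lb (j-1)) *s p (j-1) else 0) = of_real (bb j) *s pp j"
      by (cases j) (auto simp: pp0 ppS bbS)
    show ?thesis unfolding A B recur[of j] by (simp add: algebra_simps)
  qed
  finally show ?thesis by simp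
qed

lemma W_phi: "W *v phi c = phi (\<lambda>i. \<Sum>j<n. jacobi_T W b i j * c j)"
proof -
  have "W *v phi c = (\<Sum>j<n. c j *s (W *v p j))" by (simp add: phi_def mv_sum mv_smult)
  also have "\<dots> = (\<Sum>j<n. \<Sum>i<n. (jacobi_T W b i j * c j) *s p i)"
    by (intro sum.cong refl) (simp add: Wp_sum smult_sum_right vector_smult_assoc mult.commute)
  also have "\<dots> = phi (\<lambda>i. \<Sum>j<n. jacobi_T W b i j * c j)"
    unfolding phi_def smult_sum_left by (rule sum.swap)
  finally show ?thesis .
qed

abbreviation "K k \<equiv> krylov W b k"

lemma kry_0: "0 \<in> K k" unfolding krylov_def by (rule CollectI, rule exI[of _ "\<lambda>_. 0"]) simp
lemma kry_add: assumes "x \<in> K k" "y \<in> K k" shows "x + y \<in> K k"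
proof -
  obtain c where c: "x = (\<Sum>j<k. c j *s (((*v) W ^^ j) b))" using assms(1) unfolding krylov_def by blast
  obtain d where d: "y = (\<Sum>j<k. d j *s (((*v) W ^^ j) b))" using assms(2) unfolding krylov_def by blast
  have e: "x + y = (\<Sum>j<k. (c j + d j) *s (((*v) W ^^ j) b))"
    unfolding c d by (simp add: vector_sadd_rdistrib sum.distrib)
  show ?thesis unfolding krylov_def by (rule CollectI, rule exI, rule e)
qed
lemma kry_smult: assumes "x \<in> K k" shows "s *s x \<in> K k"
proof -
  obtain c where c: "x = (\<Sum>j<k. c j *s (((*v) W ^^ j) b))" using assms(1) unfolding krylov_def by blast
  have e: "s *s x = (\<Sum>j<k. (s * c j) *s (((*v) W ^^ j) b))"
    unfolding c by (simp add: smult_sum_right vector_smult_assoc)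
  show ?thesis unfolding krylov_def by (rule CollectI, rule exI, rule e)
qed
lemma kry_diff: "x \<in> K k \<Longrightarrow> y \<in> K k \<Longrightarrow> x - y \<in> K k"
  using kry_add[of x k "(-1) *s y"] kry_smult[of y k "-1"] by (simp add: vector_smult_lneg)
lemma kry_sum: "finite A \<Longrightarrow> (\<And>i. i \<in> A \<Longrightarrow> f i \<in> K k) \<Longrightarrow> sum f A \<in> K k"
  by (induction A rule: finite_induct) (auto intro: kry_add kry_0)
lemma kry_mono: assumes "k \<le> k'" "x \<in> K k" shows "x \<in> K k'"
proof -
  obtain c where c: "x = (\<Sum>j<k. c j *s (((*v) W ^^ j) b))" using assms(2) unfolding krylov_def by blast
  have e: "x = (\<Sum>j<k'. (if j < k then c j else 0) *s (((*v) W ^^ j) b))"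
    unfolding c using assms(1)
    by (intro sum.mono_neutral_cong_left) auto
  show ?thesis unfolding krylov_def by (rule CollectI, rule exI, rule e)
qed
lemma kry_W: assumes "x \<in> K k" shows "W *v x \<in> K (Suc k)"
proof -
  obtain c where c: "x = (\<Sum>j<k. c j *s (((*v) W ^^ j) b))" using assms unfolding krylov_def by blast
  have "W *v x = (\<Sum>j<k. c j *s (((*v) W ^^ Suc j) b))" unfolding c by (simp add: mv_sum mv_smult)
  also have "\<dots> = (\<Sum>j<Suc k. (if j = 0 then 0 else c (j - 1)) *s (((*v) W ^^ j) b))"
    unfolding sum.lessThan_Suc_shift by (simp del: funpow.simps)
  finally have e: "W *v x = (\<Sum>j<Suc k. (if j = 0 then 0 else c (j - 1)) *s (((*v) W ^^ j) b))" .
  show ?thesis unfolding krylov_def by (rule CollectI, rule exI, rule e)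
qed

lemma p_kry: "p i \<in> K (Suc i) \<and> pp i \<in> K (Suc i)"
proof (induction i)
  case 0
  have e: "p 0 = (\<Sum>j<Suc 0. (\<lambda>_. 1) j *s (((*v) W ^^ j) b))" by (simp add: p0)
  have "p 0 \<in> K (Suc 0)" unfolding krylov_def by (rule CollectI, rule exI, rule e)
  then show ?case by (simp add: pp0 kry_0)
next
  case (Suc i)
  have a1: "p i \<in> K (Suc (Suc i))" using Suc kry_mono[of "Suc i" "Suc (Suc i)"] by auto
  have a2: "pp i \<in> K (Suc (Suc i))" using Suc kry_mono[of "Suc i" "Suc (Suc i)"] by auto
  have a3: "W *v p i \<in> K (Suc (Suc i))" using Suc kry_W by auto
  have "v i \<in> K (Suc (Suc i))" unfolding v_def
    by (intro kry_diff kry_smult a1 a2 a3)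
  then show ?case using a1 by (simp add: pS ppS kry_smult)
qed

definition supp where "supp k = {c :: nat \<Rightarrow> complex. \<forall>i. k \<le> i \<longrightarrow> c i = 0}"

lemma phi_in_kry: assumes "k \<le> n" "c \<in> supp k" shows "phi c \<in> K k"
proof -
  have "phi c = (\<Sum>i<k. c i *s p i)"
    unfolding phi_def using assms by (intro sum.mono_neutral_cong_right) (auto simp: supp_def)
  also have "\<dots> \<in> K k"
  proof (intro kry_sum kry_smult)
    fix i assume "i \<in> {..<k}"
    then show "p i \<in> K k" using p_kry[of i] kry_mono[of "Suc i" k] by auto
  qed simp
  finally show ?thesis .
qed

fun tv :: "nat \<Rightarrow> nat \<Rightarrow> complex" where
  "tv 0 = (\<lambda>i. if i = 0 then 1 else 0)"
| "tv (Suc j) = (\<lambda>i. \<Sum>l<n. jacobi_T W b i l * tv j l)"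

lemma tv_supp: "j < i \<Longrightarrow> tv j i = 0"
proof (induction j arbitrary: i)
  case 0 then show ?case by simp
next
  case (Suc j)
  have z: "jacobi_T W b i l * tv j l = 0" for l
    using Suc by (cases "j < l") (auto simp: jacobi_T_def)
  show ?case by (simp only: tv.simps z sum.neutral_const)
qed

lemma phi_tv: "((*v) W ^^ j) b = phi (tv j)"
proof (induction j)
  case 0
  have "phi (tv 0) = (\<Sum>i<n. if i = 0 then p i else 0)" unfolding phi_def
    by (intro sum.cong refl) simp
  also have "\<dots> = p 0" using n_pos by simp
  finally have "phi (tv 0) = p 0" .
  then show ?case by (simp add: p0)
next
  case (Suc j) then show ?case by (simp add: W_phi)
qed

lemma kry_phi: assumes "y \<in> K k" shows "\<exists>c\<in>supp k. y = phi c"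
proof -
  obtain c where c: "y = (\<Sum>j<k. c j *s (((*v) W ^^ j) b))" using assms unfolding krylov_def by blast
  have "y = phi (\<lambda>i. \<Sum>j<k. c j * tv j i)" unfolding c phi_tv phi_lin ..
  moreover have "(\<lambda>i. \<Sum>j<k. c j * tv j i) \<in> supp k" unfolding supp_def
    by (auto intro!: sum.neutral simp: tv_supp)
  ultimately show ?thesis by blast
qed

end


lemma L2_set_delta:
  assumes "k \<in> A" "finite A"
  shows "L2_set (\<lambda>i. if i = k then x else 0) A = \<bar>x\<bar>"
  using assms by (simp add: L2_set_def if_distrib[of "\<lambda>t. t^2"] cong: if_cong)

lemma prod_split_add: fixes k i :: nat shows "(\<Prod>l<k+i. f l) = (\<Prod>l<k. f l) * (\<Prod>l<i. f (k+l)) "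
  by (induction i) (simp_all add: mult.assoc)

locale lzh = lzc W b n for W :: "complex^'N^'N" and b and n +
  fixes \<alpha> \<beta> :: "nat \<Rightarrow> real"
  assumes hpdW: "hpd W" and alpha_pos: "\<forall>j<n. 0 < \<alpha> j"
    and chol: "\<forall>i<n. \<forall>j<n. jacobi_T W b i j = of_real (\<Sum>l<n. bidiag_H \<alpha> \<beta> i l * bidiag_H \<alpha> \<beta> j l)"
begin

abbreviation "HH \<equiv> bidiag_H \<alpha> \<beta>"
definition Ht :: "(nat \<Rightarrow> complex) \<Rightarrow> nat \<Rightarrow> complex" where "Ht c l = (\<Sum>j<n. of_real (HH j l) * c j)"
definition Hm :: "(nat \<Rightarrow> complex) \<Rightarrow> nat \<Rightarrow> complex" where "Hm w i = (\<Sum>l<n. of_real (HH i l) * w l)"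
definition Tv :: "(nat \<Rightarrow> complex) \<Rightarrow> nat \<Rightarrow> complex" where "Tv c i = (\<Sum>j<n. jacobi_T W b i j * c j)"
definition g :: "nat \<Rightarrow> real" where "g i = Hi \<alpha> \<beta> i 0"
definition e0 :: "nat \<Rightarrow> complex" where "e0 i = (if i = 0 then 1 else 0)"

lemma alpha_nz: "\<forall>l<n. \<alpha> l \<noteq> 0" using alpha_pos by force

lemma Tv_HH: assumes i: "i < n" shows "Tv c i = Hm (Ht c) i"
proof -
  have "Tv c i = (\<Sum>j<n. \<Sum>l<n. of_real (HH i l) * (of_real (HH j l) * c j))"
    unfolding Tv_def using i chol by (intro sum.cong refl) (simp add: sum_distrib_right sum_distrib_left mult_ac)
  also have "\<dots> = (\<Sum>l<n. \<Sum>j<n. of_real (HH i l) * (of_real (HH j l) * c j))" by (rule sum.swap)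
  also have "\<dots> = Hm (Ht c) i" unfolding Hm_def Ht_def by (simp add: sum_distrib_left)
  finally show ?thesis .
qed

lemma Hg: assumes "i < n" shows "(\<Sum>l<n. HH i l * g l) = (if i = 0 then 1 else 0)"
  unfolding g_def using H_Hi[OF assms _ alpha_nz, of 0] n_pos by simp

lemma Hm_g: assumes "i < n" shows "Hm (\<lambda>l. of_real (g l)) i = e0 i"
proof -
  have "Hm (\<lambda>l. of_real (g l)) i = of_real (\<Sum>l<n. HH i l * g l)" unfolding Hm_def by simp
  then show ?thesis using Hg[OF assms] by (simp add: e0_def)
qed

lemma phi_cong: "(\<And>i. i < n \<Longrightarrow> f i = f' i) \<Longrightarrow> phi f = phi f'"
  unfolding phi_def by (intro sum.cong) auto

lemma phi_e0: "phi e0 = b"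
proof -
  have "phi e0 = (\<Sum>i<n. if i = 0 then p i else 0)" unfolding phi_def e0_def
    by (intro sum.cong refl) simp
  also have "\<dots> = b" using n_pos by (simp add: p0)
  finally show ?thesis .
qed

lemma W_phi': "W *v phi c = phi (Tv c)" unfolding Tv_def by (rule W_phi)

lemma beta_pos: assumes j: "Suc j < n" shows "0 < \<beta> j"
proof -
  have "jacobi_T W b (Suc j) j = of_real (lb j)" by (simp add: jacobi_T_def)
  moreover have "jacobi_T W b (Suc j) j = of_real (\<Sum>l<n. HH (Suc j) l * HH j l)" using chol j by simp
  moreover have "(\<Sum>l<n. HH (Suc j) l * HH j l) = \<beta> j * \<alpha> j"
    using sum_bidiag_row_real[OF j, of \<alpha> \<beta> "\<lambda>l. HH j l"] by (simp add: bidiag_H_def)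
  ultimately have "(of_real (lb j) :: complex) = of_real (\<beta> j * \<alpha> j)" by simp
  then have "lb j = \<beta> j * \<alpha> j" by (simp only: of_real_eq_iff)
  moreover have "0 < lb j"
  proof -
    have "j < n - 1" using j by simp
    then show ?thesis using lb_nz[of j] lb_nonneg[of j] by simp
  qed
  moreover have "0 < \<alpha> j" using alpha_pos j by simp
  ultimately show ?thesis by (simp add: zero_less_mult_iff)
qed

definition s :: "nat \<Rightarrow> complex" where "s l = of_real (\<Sum>m<n. Hi \<alpha> \<beta> m l * g m)"

lemma Ht_s: assumes "l < n" shows "Ht s l = of_real (g l)"
proof -
  have "Ht s l = of_real (\<Sum>j<n. \<Sum>m<n. HH j l * Hi \<alpha> \<beta> m j * g m)"
    unfolding Ht_def s_def by (simp add: sum_distrib_left mult_ac)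
  also have "(\<Sum>j<n. \<Sum>m<n. HH j l * Hi \<alpha> \<beta> m j * g m) = (\<Sum>m<n. (\<Sum>j<n. HH j l * Hi \<alpha> \<beta> m j) * g m)"
    by (subst sum.swap) (simp add: sum_distrib_right)
  also have "\<dots> = (\<Sum>m<n. if m = l then g m else 0)"
    using assms by (intro sum.cong refl) (simp add: Hi_H[OF _ assms alpha_nz])
  also have "\<dots> = g l" using assms by simp
  finally show ?thesis .
qed

lemma W_phi_s: "W *v phi s = b"
proof -
  have "W *v phi s = phi (Tv s)" by (rule W_phi')
  also have "\<dots> = phi e0"
  proof (rule phi_cong)
    fix i assume i: "i < n"
    have "Tv s i = Hm (Ht s) i" by (rule Tv_HH[OF i])
    also have "\<dots> = Hm (\<lambda>l. of_real (g l)) i" unfolding Hm_def using Ht_s by simp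
    also have "\<dots> = e0 i" by (rule Hm_g[OF i])
    finally show "Tv s i = e0 i" .
  qed
  finally show ?thesis using phi_e0 by simp
qed

end


context lzh begin

lemma Wnorm_phi: "Wnorm W (phi d) = L2_set (\<lambda>l. norm (Ht d l)) {..<n}"
proof -
  have "cinner (phi d) (W *v phi d) = (\<Sum>i<n. cnj (d i) * Tv d i)"
    by (simp add: W_phi' phi_inner)
  also have "\<dots> = (\<Sum>i<n. \<Sum>l<n. of_real (HH i l) * cnj (d i) * Ht d l)"
    by (intro sum.cong refl) (simp add: Tv_HH Hm_def sum_distrib_left mult_ac)
  also have "\<dots> = (\<Sum>l<n. \<Sum>i<n. of_real (HH i l) * cnj (d i) * Ht d l)" by (rule sum.swap)
  also have "\<dots> = (\<Sum>l<n. cnj (Ht d l) * Ht d l)"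
    by (intro sum.cong refl) (simp add: Ht_def sum_distrib_right)
  also have "\<dots> = of_real (\<Sum>l<n. (norm (Ht d l))^2)"
    by (simp only: of_real_sum complex_norm_square mult.commute)
  finally show ?thesis unfolding Wnorm_def L2_set_def by simp
qed

lemma Ht_diff: "Ht (\<lambda>i. f i - h i) l = Ht f l - Ht h l"
  by (simp add: Ht_def algebra_simps sum_subtractf)

lemma Ht_supp: assumes "c \<in> supp k" "k \<le> l" "l < n" shows "Ht c l = 0"
  using sum_bidiag_col[OF assms(3), of \<alpha> \<beta> c] assms unfolding Ht_def supp_def by simp

definition cs :: "nat \<Rightarrow> nat \<Rightarrow> complex" where "cs k l = of_real (\<Sum>m<k. Hi \<alpha> \<beta> m l * g m)"

lemma cs_supp: "cs k \<in> supp k"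
  unfolding supp_def cs_def by (auto intro!: sum.neutral simp: Hi_zero)

lemma Ht_cs: assumes "l < n" "k \<le> n" shows "Ht (cs k) l = (if l < k then of_real (g l) else 0)"
proof -
  have "Ht (cs k) l = of_real (\<Sum>j<n. \<Sum>m<k. HH j l * Hi \<alpha> \<beta> m j * g m)"
    unfolding Ht_def cs_def by (simp add: sum_distrib_left mult_ac)
  also have "(\<Sum>j<n. \<Sum>m<k. HH j l * Hi \<alpha> \<beta> m j * g m) = (\<Sum>m<k. (\<Sum>j<n. HH j l * Hi \<alpha> \<beta> m j) * g m)"
    by (subst sum.swap) (simp add: sum_distrib_right)
  also have "\<dots> = (\<Sum>m<k. if m = l then g m else 0)"
    using assms by (intro sum.cong refl) (simp add: Hi_H[OF _ assms(1) alpha_nz])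
  also have "\<dots> = (if l < k then g l else 0)" by simp
  finally show ?thesis by simp
qed

lemma W_inv: "invertible W"
proof -
  have "\<forall>x. W *v x = 0 \<longrightarrow> x = 0"
  proof (intro allI impI)
    fix x :: "complex^'N" assume "W *v x = 0"
    then have "Re (cinner x (W *v x)) = 0" by simp
    then show "x = 0" using hpdW unfolding hpd_def by force
  qed
  then show ?thesis using matrix_left_invertible_ker invertible_left_inverse by blast
qed

lemma x_eq: "matrix_inv W *v b = phi s"
proof -
  have "\<exists>A'. W ** A' = mat 1 \<and> A' ** W = mat 1" using W_inv unfolding invertible_def by blast
  then have "W ** matrix_inv W = mat 1 \<and> matrix_inv W ** W = mat 1"
    unfolding matrix_inv_def by (rule someI_ex)
  then have "matrix_inv W ** W = mat 1" by simp
  then show ?thesis using W_phi_s by (metis matrix_vector_mul_assoc matrix_vector_mul_lid)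
qed

lemma err_eq: "matrix_inv W *v b - phi c = phi (\<lambda>i. s i - c i)"
  by (simp add: x_eq phi_diff)

lemma res_eq: "b - W *v phi c = phi (\<lambda>i. e0 i - Tv c i)"
  by (simp add: W_phi' phi_diff phi_e0)

lemma res_formula:
  assumes j: "j < n" and c: "c \<in> supp j" and cg: "\<forall>l<j. Ht c l = of_real (g l)" and i: "i < n"
  shows "e0 i - Tv c i = (if i = j then of_real (\<alpha> j * g j) else 0)"
proof -
  define w where "w l = (if j \<le> l then (of_real (g l) :: complex) else 0)" for l
  have "e0 i - Tv c i = Hm (\<lambda>l. of_real (g l)) i - Hm (Ht c) i" using Hm_g[OF i] Tv_HH[OF i] by simp
  also have "\<dots> = Hm w i"
  proof -
    have "of_real (HH i l) * of_real (g l) - of_real (HH i l) * Ht c l = of_real (HH i l) * w l" if "l < n" for l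
      using cg Ht_supp[OF c _ that] unfolding w_def by (cases "j \<le> l") auto
    then show ?thesis unfolding Hm_def by (simp add: sum_subtractf[symmetric])
  qed
  also have "\<dots> = of_real (\<alpha> i) * w i + (if 0 < i then of_real (\<beta> (i - 1)) * w (i - 1) else 0)"
    unfolding Hm_def by (rule sum_bidiag_row[OF i])
  also have "\<dots> = (if i = j then of_real (\<alpha> j * g j) else 0)"
  proof (cases "j < i")
    case True
    then have "\<alpha> i * g i + \<beta> (i - 1) * g (i - 1) = 0"
      using Hg[OF i] sum_bidiag_row_real[OF i, of \<alpha> \<beta> g] by simp
    then have "of_real (\<alpha> i) * (of_real (g i) :: complex) + of_real (\<beta> (i - 1)) * of_real (g (i - 1)) = 0"
      by (metis of_real_0 of_real_add of_real_mult)
    then show ?thesis using True unfolding w_def by auto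
  next
    case False then show ?thesis unfolding w_def by auto
  qed
  finally show ?thesis .
qed

lemma norm_phi_delta: assumes "j < n" shows "norm (phi (\<lambda>i. if i = j then x else 0)) = norm x"
proof -
  have "norm (phi (\<lambda>i. if i = j then x else 0)) = L2_set (\<lambda>i. if i = j then norm x else 0) {..<n}"
    unfolding norm_phi by (intro L2_set_cong) auto
  also have "\<dots> = norm x" using assms L2_set_delta[of j "{..<n}" "norm x"] by simp
  finally show ?thesis .
qed

lemma g_eq: "\<alpha> j * g j = (-1)^j * (\<Prod>l<j. \<beta> l / \<alpha> l)" if "j < n"
proof -
  have "(\<Prod>l\<in>{0..j}. \<alpha> l) = (\<Prod>l<j. \<alpha> l) * \<alpha> j"
    by (simp add: atLeast0AtMost lessThan_Suc_atMost[symmetric])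
  moreover have "\<alpha> j \<noteq> 0" using alpha_nz that by simp
  ultimately show ?thesis
    unfolding g_def Hi_def by (simp add: atLeast0LessThan prod_dividef)
qed

lemma abs_g: assumes "j < n" shows "\<bar>\<alpha> j * g j\<bar> = (\<Prod>l<j. \<beta> l / \<alpha> l)"
proof -
  have "0 \<le> (\<Prod>l<j. \<beta> l / \<alpha> l)"
    using beta_pos alpha_pos assms by (intro prod_nonneg) (simp add: less_imp_le)
  then show ?thesis unfolding g_eq[OF assms] by (simp add: abs_mult)
qed


end


lemma aHi: assumes "\<forall>l\<le>j. \<alpha> l \<noteq> 0"
  shows "\<alpha> j * Hi \<alpha> \<beta> j 0 = (-1)^j * (\<Prod>l<j. \<beta> l / \<alpha> l)"
proof -
  have "(\<Prod>l\<in>{0..j}. \<alpha> l) = (\<Prod>l<j. \<alpha> l) * \<alpha> j"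
    by (simp add: atLeast0AtMost lessThan_Suc_atMost[symmetric])
  moreover have "\<alpha> j \<noteq> 0" using assms by simp
  ultimately show ?thesis
    unfolding Hi_def by (simp add: atLeast0LessThan prod_dividef)
qed

lemma bidiag_shift: "bidiag_H \<alpha> \<beta> (k + i) (k + l) = bidiag_H (\<lambda>i. \<alpha> (k + i)) (\<lambda>i. \<beta> (k + i)) i l"
  by (simp add: bidiag_H_def)

context lzh begin

lemma g_shift: assumes "k + i < n"
  shows "g (k + i) = (\<alpha> k * g k) * Hi (\<lambda>i. \<alpha> (k + i)) (\<lambda>i. \<beta> (k + i)) i 0"
proof -
  have a1: "\<alpha> (k+i) * g (k+i) = (-1)^(k+i) * (\<Prod>l<k+i. \<beta> l / \<alpha> l)"
    unfolding g_def using assms alpha_nz by (intro aHi) auto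
  have a2: "\<alpha> k * g k = (-1)^k * (\<Prod>l<k. \<beta> l / \<alpha> l)"
    unfolding g_def using assms alpha_nz by (intro aHi) auto
  have a3: "\<alpha> (k+i) * Hi (\<lambda>i. \<alpha> (k + i)) (\<lambda>i. \<beta> (k + i)) i 0 = (-1)^i * (\<Prod>l<i. \<beta> (k+l) / \<alpha> (k+l))"
    using aHi[of i "\<lambda>i. \<alpha> (k + i)" "\<lambda>i. \<beta> (k + i)"] assms alpha_nz by auto
  have "\<alpha> (k+i) * g (k+i) = \<alpha> (k+i) * ((\<alpha> k * g k) * Hi (\<lambda>i. \<alpha> (k + i)) (\<lambda>i. \<beta> (k + i)) i 0)"
    unfolding a1 a2 mult.left_commute[of "\<alpha> (k+i)"] a3 prod_split_add by (simp add: power_add mult_ac)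
  moreover have "\<alpha> (k+i) \<noteq> 0" using assms alpha_nz by simp
  ultimately show ?thesis by simp
qed

lemma cg_result:
  assumes k: "k < n"
  shows "norm (b - W *v cga_iterate W b k) = (\<Prod>j<k. \<beta> j / \<alpha> j)
      \<and> Wnorm W (matrix_inv W *v b - cga_iterate W b k)
          = norm (b - W *v cga_iterate W b k)
            * sqrt (fmat_inv (n - k)
                 (\<lambda>i j. \<Sum>l<n - k. bidiag_H \<alpha> \<beta> (k + i) (k + l) * bidiag_H \<alpha> \<beta> (k + j) (k + l)) 0 0)"
proof -
  define x where "x = matrix_inv W *v b"
  define F where "F c = (\<Sum>l<n. (norm (of_real (g l) - Ht c l))^2)" for c
  define E where "E = (\<Sum>l\<in>{k..<n}. (g l)^2)"
  have un: "{..<n} = {..<k} \<union> {k..<n}" using k by auto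
  have Wn: "Wnorm W (x - phi c) = sqrt (F c)" for c
    unfolding x_def err_eq Wnorm_phi F_def L2_set_def
    by (simp add: Ht_diff Ht_s)
  have Fsplit: "F c = (\<Sum>l<k. (norm (of_real (g l) - Ht c l))^2) + E" if c: "c \<in> supp k" for c
  proof -
    have "F c = (\<Sum>l<k. (norm (of_real (g l) - Ht c l))^2) + (\<Sum>l\<in>{k..<n}. (norm (of_real (g l) - Ht c l))^2)"
      unfolding F_def un by (rule sum.union_disjoint) auto
    also have "(\<Sum>l\<in>{k..<n}. (norm (of_real (g l) - Ht c l))^2) = E"
      unfolding E_def using Ht_supp[OF c] by (intro sum.cong refl) auto
    finally show ?thesis .
  qed
  have FE: "E \<le> F c" if "c \<in> supp k" for c
    using Fsplit[OF that] by (simp add: sum_nonneg)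
  have Fcs: "F (cs k) = E"
    using Fsplit[OF cs_supp] Ht_cs k by simp
  let ?P = "\<lambda>y. y \<in> K k \<and> (\<forall>y'\<in>K k. Wnorm W (x - y) \<le> Wnorm W (x - y'))"
  have "?P (phi (cs k))"
  proof
    show "phi (cs k) \<in> K k" using phi_in_kry[OF _ cs_supp] k by simp
    show "\<forall>y'\<in>K k. Wnorm W (x - phi (cs k)) \<le> Wnorm W (x - y')"
    proof
      fix y' assume "y' \<in> K k"
      then obtain c' where c': "c' \<in> supp k" "y' = phi c'" using kry_phi by blast
      show "Wnorm W (x - phi (cs k)) \<le> Wnorm W (x - y')"
        unfolding c' Wn Fcs using FE[OF c'(1)] by simp
    qed
  qed
  then have P: "?P (cga_iterate W b k)" unfolding cga_iterate_def x_def[symmetric] by (rule someI)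
  then obtain c where c: "c \<in> supp k" and cga: "cga_iterate W b k = phi c" using kry_phi by blast
  have "sqrt (F c) \<le> sqrt (F (cs k))"
    using P unfolding cga Wn[symmetric] using phi_in_kry[OF _ cs_supp] k by auto
  then have "F c \<le> E" using Fcs by simp
  then have FcE: "F c = E" using FE[OF c] by simp
  then have "(\<Sum>l<k. (norm (of_real (g l) - Ht c l))^2) = 0" using Fsplit[OF c] by simp
  then have "\<forall>l<k. (norm (of_real (g l) - Ht c l))^2 = 0"
    by (subst (asm) sum_nonneg_eq_0_iff) auto
  then have cg: "\<forall>l<k. Ht c l = of_real (g l)" by simp
  have res: "b - W *v cga_iterate W b k = phi (\<lambda>i. if i = k then of_real (\<alpha> k * g k) else 0)"
    unfolding cga res_eq using res_formula[OF k c cg] by (intro phi_cong) simp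
  have nres: "norm (b - W *v cga_iterate W b k) = \<bar>\<alpha> k * g k\<bar>"
    unfolding res norm_phi_delta[OF k] by (rule norm_of_real)
  define a' where "a' = (\<lambda>i. \<alpha> (k + i))"
  define b' where "b' = (\<lambda>i. \<beta> (k + i))"
  have fm: "fmat_inv (n - k) (\<lambda>i j. \<Sum>l<n - k. bidiag_H \<alpha> \<beta> (k + i) (k + l) * bidiag_H \<alpha> \<beta> (k + j) (k + l)) 0 0
      = (\<Sum>l<n-k. (Hi a' b' l 0)^2)"
    unfolding bidiag_shift a'_def b'_def using k alpha_nz by (intro fmat_inv_HHt) auto
  have "E = (\<Sum>i<n-k. (g (k + i))^2)"
    unfolding E_def by (subst sum.atLeastLessThan_shift_0) (simp add: atLeast0LessThan comp_def)
  also have "\<dots> = (\<alpha> k * g k)^2 * (\<Sum>l<n-k. (Hi a' b' l 0)^2)"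
    unfolding sum_distrib_left a'_def b'_def using g_shift by (intro sum.cong refl) (simp add: power_mult_distrib)
  finally have "sqrt E = \<bar>\<alpha> k * g k\<bar> * sqrt (\<Sum>l<n-k. (Hi a' b' l 0)^2)"
    by (simp add: real_sqrt_mult)
  then show ?thesis
    unfolding nres fm using abs_g[OF k] FcE Wn[of c] cga x_def by simp
qed

end


context lzh begin

lemma Tv_lin: "Tv (\<lambda>i. \<Sum>j\<in>A. f j * h j i) x = (\<Sum>j\<in>A. f j * Tv (h j) x)"
  unfolding Tv_def by (simp add: sum_distrib_left sum.swap[of _ A] mult_ac)

lemma rho_nz: assumes "j < n" shows "\<alpha> j * g j \<noteq> 0"
proof -
  have "0 < (\<Prod>l<j. \<beta> l / \<alpha> l)"
    using beta_pos alpha_pos assms by (intro prod_pos) simp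
  then show ?thesis using abs_g[OF assms] by (metis abs_zero order_less_irrefl)
qed

lemma g0: "\<alpha> 0 * g 0 = 1" using aHi[of 0 \<alpha> \<beta>] alpha_nz n_pos unfolding g_def by simp

lemma rho_step: assumes "Suc l < n" shows "\<alpha> (Suc l) * g (Suc l) = - (\<beta> l * g l)"
  using Hg[OF assms] sum_bidiag_row_real[OF assms, of \<alpha> \<beta> g] by simp

lemma inv_rho_sq: assumes "j < n"
  shows "1 / (\<alpha> j * g j)^2 = (\<Prod>l<j. \<alpha> l ^ 2 / \<beta> l ^ 2)"
proof -
  have "(\<alpha> j * g j)^2 = (\<Prod>l<j. \<beta> l / \<alpha> l)^2"
    using abs_g[OF assms] by (metis power2_abs)
  also have "\<dots> = (\<Prod>l<j. \<beta> l ^ 2 / \<alpha> l ^ 2)" by (simp only: prod_power_distrib power_divide)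
  finally have e: "(\<alpha> j * g j)^2 = (\<Prod>l<j. \<beta> l ^ 2 / \<alpha> l ^ 2)" .
  have "(\<Prod>l<j. \<alpha> l ^ 2 / \<beta> l ^ 2) * (\<Prod>l<j. \<beta> l ^ 2 / \<alpha> l ^ 2) = (\<Prod>l<j. (\<alpha> l ^ 2 / \<beta> l ^ 2) * (\<beta> l ^ 2 / \<alpha> l ^ 2))"
    by (rule prod.distrib[symmetric])
  also have "\<dots> = 1"
  proof (rule prod.neutral, intro ballI)
    fix l assume "l \<in> {..<j}"
    then have "\<alpha> l \<noteq> 0" "\<beta> l \<noteq> 0" using assms alpha_nz beta_pos[of l] by auto
    then show "(\<alpha> l ^ 2 / \<beta> l ^ 2) * (\<beta> l ^ 2 / \<alpha> l ^ 2) = 1" by (simp add: field_simps)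
  qed
  finally have XY: "(\<Prod>l<j. \<alpha> l ^ 2 / \<beta> l ^ 2) * (\<Prod>l<j. \<beta> l ^ 2 / \<alpha> l ^ 2) = 1" .
  then have Y: "(\<Prod>l<j. \<beta> l ^ 2 / \<alpha> l ^ 2) \<noteq> 0" by (metis mult_zero_right zero_neq_one)
  show ?thesis unfolding e using XY Y by (simp add: field_simps)
qed

lemma minres_result:
  assumes k: "k < n"
  shows "norm (b - W *v minres_iterate W b k) = (\<Sum>j\<le>k. \<Prod>l<j. \<alpha> l ^ 2 / \<beta> l ^ 2) powr (-1/2)"
proof -
  define S where "S = (\<Sum>j\<le>k. \<Prod>l<j. \<alpha> l ^ 2 / \<beta> l ^ 2)"
  define z where "z j = (if j \<le> k then 1 / (\<alpha> j * g j) else 0)" for j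
  have zsq: "(\<Sum>j<n. (z j)^2) = S"
  proof -
    have "(\<Sum>j<n. (z j)^2) = (\<Sum>j\<le>k. (z j)^2)"
      using k unfolding z_def by (intro sum.mono_neutral_cong_right) auto
    also have "\<dots> = S" unfolding S_def z_def using k
      by (intro sum.cong refl) (simp add: inv_rho_sq[symmetric] power_one_over)
    finally show ?thesis .
  qed
  have Spos: "0 < S"
  proof -
    have "(\<Sum>j\<in>{0}. \<Prod>l<j. \<alpha> l ^ 2 / \<beta> l ^ 2) \<le> S"
      unfolding S_def by (intro sum_mono2) (auto intro!: prod_nonneg)
    then show ?thesis by simp
  qed
  have L2z: "L2_set z {..<n} = sqrt S" unfolding L2_set_def zsq ..
  have orth0: "(\<Sum>i<n. of_real (z i) * Tv c i) = 0" if c: "c \<in> supp k" for c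
  proof -
    have "(\<Sum>i<n. of_real (z i) * Tv c i) = (\<Sum>i<n. \<Sum>l<n. of_real (z i * HH i l) * Ht c l)"
      by (intro sum.cong refl) (simp add: Tv_HH Hm_def sum_distrib_left mult_ac)
    also have "\<dots> = (\<Sum>l<n. \<Sum>i<n. of_real (z i * HH i l) * Ht c l)" by (rule sum.swap)
    also have "\<dots> = (\<Sum>l<n. of_real (\<Sum>i<n. HH i l * z i) * Ht c l)"
      by (intro sum.cong refl) (simp add: sum_distrib_right sum_distrib_left mult_ac)
    also have "\<dots> = 0"
    proof (rule sum.neutral, intro ballI)
      fix l assume l: "l \<in> {..<n}"
      show "of_real (\<Sum>i<n. HH i l * z i) * Ht c l = 0"
      proof (cases "l < k")
        case True
        have sl: "Suc l < n" using True k by simp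
        have "(\<Sum>i<n. HH i l * z i) = \<alpha> l * z l + \<beta> l * z (Suc l)"
          using sum_bidiag_col_real[of l n \<alpha> \<beta> z] l sl by simp
        also have "\<dots> = 0"
        proof -
          have "\<alpha> l \<noteq> 0" "\<beta> l \<noteq> 0" using alpha_nz beta_pos[OF sl] sl by auto
          moreover have "g l \<noteq> 0" using rho_nz[of l] sl by auto
          ultimately show ?thesis unfolding z_def rho_step[OF sl] using True by (simp add: field_simps)
        qed
        finally show ?thesis by simp
      next
        case False then show ?thesis using Ht_supp[OF c] l by simp
      qed
    qed
    finally show ?thesis .
  qed
  have lower: "1 / sqrt S \<le> norm (b - W *v phi c)" if c: "c \<in> supp k" for c
  proof -
    define r where "r i = e0 i - Tv c i" for i
    have "(\<Sum>i<n. of_real (z i) * r i) = (\<Sum>i<n. of_real (z i) * e0 i) - (\<Sum>i<n. of_real (z i) * Tv c i)"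
      unfolding r_def by (simp add: right_diff_distrib sum_subtractf)
    also have "\<dots> = 1"
    proof -
      have "(\<Sum>i<n. of_real (z i) * e0 i) = (\<Sum>i<n. if i = 0 then of_real (z 0) else 0)"
        unfolding e0_def by (intro sum.cong refl) simp
      also have "\<dots> = 1" using n_pos g0 by (simp add: z_def)
      finally show ?thesis using orth0[OF c] by simp
    qed
    finally have one: "(\<Sum>i<n. of_real (z i) * r i) = 1" .
    have "1 = norm (\<Sum>i<n. of_real (z i) * r i)" using one by simp
    also have "\<dots> \<le> (\<Sum>i<n. \<bar>z i\<bar> * \<bar>norm (r i)\<bar>)"
      by (rule order_trans[OF norm_sum]) (simp add: norm_mult)
    also have "\<dots> \<le> L2_set z {..<n} * L2_set (\<lambda>i. norm (r i)) {..<n}" by (rule L2_set_mult_ineq)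
    also have "\<dots> = sqrt S * norm (b - W *v phi c)"
      unfolding L2z res_eq norm_phi r_def ..
    finally have "1 \<le> sqrt S * norm (b - W *v phi c)" .
    then show ?thesis using Spos by (simp add: field_simps)
  qed
  define lam where "lam j = (z j)^2 / S" for j
  define cM where "cM i = (\<Sum>j\<le>k. of_real (lam j) * cs j i)" for i
  have cM_supp: "cM \<in> supp k"
    unfolding supp_def cM_def
  proof (intro CollectI allI impI sum.neutral ballI)
    fix i j assume "k \<le> i" "j \<in> {..k}"
    then show "of_real (lam j) * cs j i = 0" using cs_supp[of j] unfolding supp_def by auto
  qed
  have lam_sum: "(\<Sum>j\<le>k. lam j) = 1"
  proof -
    have "(\<Sum>j\<le>k. lam j) = (\<Sum>j<n. (z j)^2) / S"
      unfolding lam_def sum_divide_distrib[symmetric] using k unfolding z_def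
      by (intro arg_cong[where f="\<lambda>t. t / S"] sum.mono_neutral_cong_left) auto
    then show ?thesis using zsq Spos by simp
  qed
  have resM: "e0 i - Tv cM i = of_real (z i / S)" if i: "i < n" for i
  proof -
    have "e0 i - Tv cM i = (\<Sum>j\<le>k. of_real (lam j) * (e0 i - Tv (cs j) i))"
    proof -
      have "(\<Sum>j\<le>k. of_real (lam j) * (e0 i - Tv (cs j) i)) = of_real (\<Sum>j\<le>k. lam j) * e0 i - (\<Sum>j\<le>k. of_real (lam j) * Tv (cs j) i)"
        by (simp add: right_diff_distrib sum_subtractf sum_distrib_right)
      then show ?thesis unfolding lam_sum cM_def Tv_lin by simp
    qed
    also have "\<dots> = (\<Sum>j\<le>k. if i = j then of_real (lam j * (\<alpha> j * g j)) else 0)"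
    proof (intro sum.cong refl)
      fix j assume j: "j \<in> {..k}"
      then have jn: "j < n" using k by simp
      have "e0 i - Tv (cs j) i = (if i = j then of_real (\<alpha> j * g j) else 0)"
        using res_formula[OF jn cs_supp _ i] Ht_cs jn by simp
      then show "of_real (lam j) * (e0 i - Tv (cs j) i) = (if i = j then of_real (lam j * (\<alpha> j * g j)) else 0)"
        by simp
    qed
    also have "\<dots> = (if i \<le> k then of_real (lam i * (\<alpha> i * g i)) else 0)" by simp
    also have "\<dots> = of_real (z i / S)"
    proof (cases "i \<le> k")
      case True
      then have "\<alpha> i * g i \<noteq> 0" using rho_nz i by simp
      then show ?thesis using True unfolding lam_def z_def by (simp add: field_simps power2_eq_square)
    next
      case False then show ?thesis unfolding z_def by simp
    qed
    finally show ?thesis .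
  qed
  have nM: "norm (b - W *v phi cM) = 1 / sqrt S"
  proof -
    have "norm (b - W *v phi cM) = L2_set (\<lambda>i. norm (of_real (z i / S) :: complex)) {..<n}"
      unfolding res_eq norm_phi using resM by (intro L2_set_cong) auto
    also have "\<dots> = L2_set (\<lambda>i. z i * (1 / S)) {..<n}"
      unfolding L2_set_def by (intro arg_cong[where f=sqrt] sum.cong refl) (simp only: norm_of_real power2_abs, simp)
    also have "\<dots> = L2_set z {..<n} * (1 / S)"
      using L2_set_right_distrib[of "1/S" z "{..<n}"] Spos by (simp add: mult.commute)
    also have "\<dots> = 1 / sqrt S"
    proof -
      have q: "sqrt S * sqrt S = S" using Spos by simp
      have "0 < sqrt S" using Spos by simp
      then show ?thesis unfolding L2z using q Spos by (simp add: field_simps)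
    qed
    finally show ?thesis .
  qed
  let ?P = "\<lambda>y. y \<in> K k \<and> (\<forall>y'\<in>K k. norm (b - W *v y) \<le> norm (b - W *v y'))"
  have "?P (phi cM)"
  proof
    show "phi cM \<in> K k" using phi_in_kry[OF _ cM_supp] k by simp
    show "\<forall>y'\<in>K k. norm (b - W *v phi cM) \<le> norm (b - W *v y')"
    proof
      fix y' assume "y' \<in> K k"
      then obtain c' where c': "c' \<in> supp k" "y' = phi c'" using kry_phi by blast
      show "norm (b - W *v phi cM) \<le> norm (b - W *v y')" unfolding nM c'(2) using lower[OF c'(1)] .
    qed
  qed
  then have P: "?P (minres_iterate W b k)" unfolding minres_iterate_def by (rule someI)
  then obtain c where c: "c \<in> supp k" and mr: "minres_iterate W b k = phi c" using kry_phi by blast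
  have inK: "phi cM \<in> K k" using phi_in_kry[OF _ cM_supp] k by simp
  have le: "norm (b - W *v minres_iterate W b k) \<le> norm (b - W *v phi cM)"
    using P inK by blast
  have ge: "1 / sqrt S \<le> norm (b - W *v minres_iterate W b k)"
    unfolding mr by (rule lower[OF c])
  have "norm (b - W *v minres_iterate W b k) = 1 / sqrt S"
    using le ge nM by linarith
  also have "\<dots> = S powr (-1/2)"
  proof -
    have "S powr (-1/2) = inverse (S powr (1/2))" using powr_minus[of S "1/2"] by simp
    also have "S powr (1/2) = sqrt S" using Spos by (intro powr_half_sqrt) simp
    finally show ?thesis by (simp add: inverse_eq_divide)
  qed
  finally show ?thesis unfolding S_def .
qed

lemma minres_n: "b - W *v minres_iterate W b n = 0"
proof -
  have s_supp: "s \<in> supp n" unfolding supp_def s_def by (auto intro!: sum.neutral simp: Hi_zero)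
  let ?P = "\<lambda>y. y \<in> K n \<and> (\<forall>y'\<in>K n. norm (b - W *v y) \<le> norm (b - W *v y'))"
  have inK: "phi s \<in> K n" by (rule phi_in_kry[OF _ s_supp]) simp
  have zero: "norm (b - W *v phi s) = 0" using W_phi_s by simp
  have "?P (phi s)" using inK zero by simp
  then have P: "?P (minres_iterate W b n)" unfolding minres_iterate_def by (rule someI)
  then have "norm (b - W *v minres_iterate W b n) \<le> norm (b - W *v phi s)"
    using inK by blast
  then have "norm (b - W *v minres_iterate W b n) \<le> 0" using zero by simp
  then show ?thesis by simp
qed

end

theorem theorem1p1:
  fixes W :: "complex^'N^'N" and b :: "complex^'N" and n :: nat
    and \<alpha> \<beta> :: "nat \<Rightarrow> real"
  assumes hpd: "hpd W"
    and bnorm: "norm b = 1"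
    and lterm: "lanczos_terminates_at W b n"
    and nN: "n \<le> CARD('N)"
    and alpha_pos: "\<forall>j<n. 0 < \<alpha> j"
    and chol: "\<forall>i<n. \<forall>j<n. jacobi_T W b i j
                 = of_real (\<Sum>l<n. bidiag_H \<alpha> \<beta> i l * bidiag_H \<alpha> \<beta> j l)"
  shows
    "(\<forall>k<n.
        norm (b - W *v cga_iterate W b k) = (\<Prod>j<k. \<beta> j / \<alpha> j)
      \<and> Wnorm W (matrix_inv W *v b - cga_iterate W b k)
          = norm (b - W *v cga_iterate W b k)
            * sqrt (fmat_inv (n - k)
                 (\<lambda>i j. \<Sum>l<n - k. bidiag_H \<alpha> \<beta> (k + i) (k + l) * bidiag_H \<alpha> \<beta> (k + j) (k + l)) 0 0))
   \<and> (\<forall>k<n.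
        norm (b - W *v minres_iterate W b k)
          = (\<Sum>j\<le>k. \<Prod>l<j. \<alpha> l ^ 2 / \<beta> l ^ 2) powr (-1/2))
   \<and> b - W *v minres_iterate W b n = 0"
proof -
  interpret lzh W b n \<alpha> \<beta>
  proof unfold_locales
    show "hermitian W" using hpd by (simp add: hpd_def)
  qed (use hpd bnorm lterm alpha_pos chol in auto)
  show ?thesis using cg_result minres_result minres_n by blast
qed

end
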